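(* Let $(\mathcal C,\otimes,\mathbb I)$ be a monoidal category with pushouts and $(H,\Delta,\varepsilon)$ a coalgebra in $\mathcal C$. Let $(X,X\bullet H,\pi_X,\rho_X)$ be a geometric partial $H$-comodule. Consider the free comodule $(X\otimes H,X\otimes\Delta)$ and the two parallel morphisms of $H$-comodules $$\rho_X\otimes H,\ \ (\pi_X\otimes H)\circ(X\otimes\Delta)\ :\ (X\otimes H,X\otimes\Delta)\longrightarrow ((X\bullet H)\otimes H,(X\bullet H)\otimes\Delta).$$ Then $X$ is globalizable if and only if (I) the equalizer $(Y_X,\kappa)$ of this pair exists in $\mathsf{Com}^H$, and (II) the commutative square formed by $(X\otimes\varepsilon)\circ\kappa:Y_X\to X$, $\kappa:Y_X\to X\otimes H$, $\rho_X:X\to X\bullet H$ and $\pi_X:X\otimes H\to X\bullet H$ is a pushout square in $\mathcal C$. Moreover, under these equivalent conditions, $Y_X$ (with $p=(X\otimes\varepsilon)\circ\kappa$) is the globalization of $X$, and $Y_X$ is co-generated by $X$ as a global $H$-comodule, i.e. $(p\otimes H)\circ\delta_{Y_X}:Y_X\to X\otimes H$ is a monomorphism in $\mathsf{Com}^H$, where $\delta_{Y_X}$ is the coaction of $Y_X$.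
   Context: $\mathcal C$ is treated as strict monoidal; the identity of an object $X$ is also written $X$ (so $X\otimes\varepsilon=\mathrm{id}_X\otimes\varepsilon$). $\mathsf{Com}^H$ is the category of right $H$-comodules $(Y,\delta)$, $\delta:Y\to Y\otimes H$. A partial comodule datum is $(X,X\bullet H,\pi_X,\rho_X)$ with morphisms $\rho_X:X\to X\bullet H$ and $\pi_X:X\otimes H\to X\bullet H$, $\pi_X$ an epimorphism. For such a datum let: $(X\bullet H)\bullet H$ be the pushout of $\pi_X$ and $\rho_X\otimes H:X\otimes H\to(X\bullet H)\otimes H$, with coprojections $\rho_X\bullet H:X\bullet H\to (X\bullet H)\bullet H$ and $\pi_{X\bullet H}:(X\bullet H)\otimes H\to(X\bullet H)\bullet H$; $X\bullet(H\otimes H)$ the pushout of $\pi_X$ and $X\otimes\Delta$, with coprojections $X\bullet\Delta:X\bullet H\to X\bullet(H\otimes H)$ and $\pi_{X,\Delta}:X\otimes H\otimes H\to X\bullet(H\otimes H)$; $X\bullet(H\bullet H)$ the pushout of $\pi_{X,\Delta}$ and $\pi_X\otimes H:X\otimes H\otimes H\to(X\bullet H)\otimes H$, with coprojections $\pi'_X:X\bullet(H\otimes H)\to X\bullet(H\bullet H)$ and $\pi'_{X,\Delta}:(X\bullet H)\otimes H\to X\bullet(H\bullet H)$. A geometric partial $H$-comodule is a datum such that (GP1) there is $X\bullet\varepsilon:X\bullet H\to X$ with $(X\bullet\varepsilon)\circ\rho_X=\mathrm{id}_X$ and $(X\bullet\varepsilon)\circ\pi_X=X\otimes\varepsilon$;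 (GP2) there is an isomorphism $\theta:X\bullet(H\bullet H)\to(X\bullet H)\bullet H$ with $\theta\circ\pi'_{X,\Delta}=\pi_{X\bullet H}$ and $(\rho_X\bullet H)\circ\rho_X=\theta\circ\pi'_X\circ(X\bullet\Delta)\circ\rho_X$. A morphism $X\to X'$ of geometric partial comodules is a pair $(f,f\bullet H)$ with $f:X\to X'$, $f\bullet H:X\bullet H\to X'\bullet H$, $\rho_{X'}\circ f=(f\bullet H)\circ\rho_X$ and $\pi_{X'}\circ(f\otimes H)=(f\bullet H)\circ\pi_X$. These form a category $\mathsf{PCom}^H$. A global comodule $(Y,\delta)$ gives the geometric partial comodule $\mathcal I(Y)=(Y,Y\otimes H,\mathrm{id},\delta)$; a morphism $\mathcal I(Y)\to X$ amounts to a morphism $g:Y\to X$ in $\mathcal C$ with $\pi_X\circ(g\otimes H)\circ\delta=\rho_X\circ g$. A globalization of a geometric partial comodule $X$ is a global comodule $(Y,\delta)$ with a morphism $p:Y\to X$ in $\mathcal C$ such that (GL1) $p$ is a morphism $\mathcal I(Y)\to X$; (GL2) $X\bullet H$ with $\rho_X,\pi_X$ is a pushout in $\mathcal C$ of $p:Y\to X$ and $(p\otimes H)\circ\delta:Y\to X\otimes H$; (GL3) for every global comodule $(Z,\delta')$ and every morphism $q:\mathcal I(Z)\to X$ of geometric partial comodules there is a unique comodule morphism $\eta:Z\to Y$ with $p\circ\eta=q$. $X$ is globalizable if a globalization exists. *)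

theory Defs
  imports Main
begin

text \<open>A (small) category whose objects are all elements of type 'o and whose
morphisms are all elements of type 'm, together with a strict monoidal structure.
mcomp C g f is the composite "g after f".\<close>

record ('o, 'm) smc =
  mdom    :: "'m \<Rightarrow> 'o"
  mcod    :: "'m \<Rightarrow> 'o"
  mid     :: "'o \<Rightarrow> 'm"
  mcomp   :: "'m \<Rightarrow> 'm \<Rightarrow> 'm"
  otens   :: "'o \<Rightarrow> 'o \<Rightarrow> 'o"
  mtens   :: "'m \<Rightarrow> 'm \<Rightarrow> 'm"
  unitobj :: "'o"

definition arr :: "('o,'m) smc \<Rightarrow> 'm \<Rightarrow> 'o \<Rightarrow> 'o \<Rightarrow> bool" where
  "arr C f A B \<longleftrightarrow> mdom C f = A \<and> mcod C f = B"

definition strict_monoidal_category :: "('o,'m) smc \<Rightarrow> bool" where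
  "strict_monoidal_category C \<longleftrightarrow>
     (\<forall>A. arr C (mid C A) A A) \<and>
     (\<forall>f g. mcod C f = mdom C g \<longrightarrow> arr C (mcomp C g f) (mdom C f) (mcod C g)) \<and>
     (\<forall>f. mcomp C f (mid C (mdom C f)) = f \<and> mcomp C (mid C (mcod C f)) f = f) \<and>
     (\<forall>f g h. mcod C f = mdom C g \<longrightarrow> mcod C g = mdom C h \<longrightarrow>
        mcomp C h (mcomp C g f) = mcomp C (mcomp C h g) f) \<and>
     (\<forall>f g. arr C (mtens C f g) (otens C (mdom C f) (mdom C g)) (otens C (mcod C f) (mcod C g))) \<and>
     (\<forall>A B. mtens C (mid C A) (mid C B) = mid C (otens C A B)) \<and>
     (\<forall>f f' g g'. mcod C f = mdom C f' \<longrightarrow> mcod C g = mdom C g' \<longrightarrow>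
        mtens C (mcomp C f' f) (mcomp C g' g) = mcomp C (mtens C f' g') (mtens C f g)) \<and>
     (\<forall>A B D. otens C (otens C A B) D = otens C A (otens C B D)) \<and>
     (\<forall>f g h. mtens C (mtens C f g) h = mtens C f (mtens C g h)) \<and>
     (\<forall>A. otens C (unitobj C) A = A \<and> otens C A (unitobj C) = A) \<and>
     (\<forall>f. mtens C (mid C (unitobj C)) f = f \<and> mtens C f (mid C (unitobj C)) = f)"

definition epi :: "('o,'m) smc \<Rightarrow> 'm \<Rightarrow> bool" where
  "epi C e \<longleftrightarrow> (\<forall>g h. mdom C g = mcod C e \<longrightarrow> mdom C h = mcod C e \<longrightarrow>
      mcomp C g e = mcomp C h e \<longrightarrow> g = h)"

definition iso :: "('o,'m) smc \<Rightarrow> 'm \<Rightarrow> 'o \<Rightarrow> 'o \<Rightarrow> bool" where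
  "iso C f A B \<longleftrightarrow> arr C f A B \<and>
     (\<exists>g. arr C g B A \<and> mcomp C g f = mid C A \<and> mcomp C f g = mid C B)"

definition is_pushout :: "('o,'m) smc \<Rightarrow> 'm \<Rightarrow> 'm \<Rightarrow> 'o \<Rightarrow> 'm \<Rightarrow> 'm \<Rightarrow> bool" where
  "is_pushout C f g P i j \<longleftrightarrow>
     mdom C f = mdom C g \<and> arr C i (mcod C f) P \<and> arr C j (mcod C g) P \<and>
     mcomp C i f = mcomp C j g \<and>
     (\<forall>Q i' j'. arr C i' (mcod C f) Q \<longrightarrow> arr C j' (mcod C g) Q \<longrightarrow>
        mcomp C i' f = mcomp C j' g \<longrightarrow>
        (\<exists>!u. arr C u P Q \<and> mcomp C u i = i' \<and> mcomp C u j = j'))"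

definition has_pushouts :: "('o,'m) smc \<Rightarrow> bool" where
  "has_pushouts C \<longleftrightarrow> (\<forall>f g. mdom C f = mdom C g \<longrightarrow> (\<exists>P i j. is_pushout C f g P i j))"

definition coalgebra :: "('o,'m) smc \<Rightarrow> 'o \<Rightarrow> 'm \<Rightarrow> 'm \<Rightarrow> bool" where
  "coalgebra C H \<Delta> \<epsilon> \<longleftrightarrow>
     arr C \<Delta> H (otens C H H) \<and> arr C \<epsilon> H (unitobj C) \<and>
     mcomp C (mtens C \<Delta> (mid C H)) \<Delta> = mcomp C (mtens C (mid C H) \<Delta>) \<Delta> \<and>
     mcomp C (mtens C \<epsilon> (mid C H)) \<Delta> = mid C H \<and>
     mcomp C (mtens C (mid C H) \<epsilon>) \<Delta> = mid C H"

definition comodule :: "('o,'m) smc \<Rightarrow> 'o \<Rightarrow> 'm \<Rightarrow> 'm \<Rightarrow> 'o \<Rightarrow> 'm \<Rightarrow> bool" where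
  "comodule C H \<Delta> \<epsilon> Y \<delta> \<longleftrightarrow>
     arr C \<delta> Y (otens C Y H) \<and>
     mcomp C (mtens C \<delta> (mid C H)) \<delta> = mcomp C (mtens C (mid C Y) \<Delta>) \<delta> \<and>
     mcomp C (mtens C (mid C Y) \<epsilon>) \<delta> = mid C Y"

definition comod_hom :: "('o,'m) smc \<Rightarrow> 'o \<Rightarrow> 'o \<Rightarrow> 'm \<Rightarrow> 'o \<Rightarrow> 'm \<Rightarrow> 'm \<Rightarrow> bool" where
  "comod_hom C H Y \<delta> Y' \<delta>' f \<longleftrightarrow>
     arr C f Y Y' \<and> mcomp C \<delta>' f = mcomp C (mtens C f (mid C H)) \<delta>"

definition comod_equalizer ::
  "('o,'m) smc \<Rightarrow> 'o \<Rightarrow> 'm \<Rightarrow> 'm \<Rightarrow> 'o \<Rightarrow> 'm \<Rightarrow> 'm \<Rightarrow> 'm \<Rightarrow> 'o \<Rightarrow> 'm \<Rightarrow> 'm \<Rightarrow> bool" where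
  "comod_equalizer C H \<Delta> \<epsilon> S \<sigma> f g E \<delta>E \<kappa> \<longleftrightarrow>
     comodule C H \<Delta> \<epsilon> E \<delta>E \<and> comod_hom C H E \<delta>E S \<sigma> \<kappa> \<and>
     mcomp C f \<kappa> = mcomp C g \<kappa> \<and>
     (\<forall>W \<delta>W q. comodule C H \<Delta> \<epsilon> W \<delta>W \<longrightarrow> comod_hom C H W \<delta>W S \<sigma> q \<longrightarrow>
        mcomp C f q = mcomp C g q \<longrightarrow>
        (\<exists>!u. comod_hom C H W \<delta>W E \<delta>E u \<and> mcomp C \<kappa> u = q))"

definition comod_mono ::
  "('o,'m) smc \<Rightarrow> 'o \<Rightarrow> 'm \<Rightarrow> 'm \<Rightarrow> 'o \<Rightarrow> 'm \<Rightarrow> 'o \<Rightarrow> 'm \<Rightarrow> 'm \<Rightarrow> bool" where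
  "comod_mono C H \<Delta> \<epsilon> Y \<delta> Z \<delta>' m \<longleftrightarrow>
     comod_hom C H Y \<delta> Z \<delta>' m \<and>
     (\<forall>W \<delta>W a b. comodule C H \<Delta> \<epsilon> W \<delta>W \<longrightarrow> comod_hom C H W \<delta>W Y \<delta> a \<longrightarrow>
        comod_hom C H W \<delta>W Y \<delta> b \<longrightarrow> mcomp C m a = mcomp C m b \<longrightarrow> a = b)"

definition partial_comodule_datum :: "('o,'m) smc \<Rightarrow> 'o \<Rightarrow> 'o \<Rightarrow> 'o \<Rightarrow> 'm \<Rightarrow> 'm \<Rightarrow> bool" where
  "partial_comodule_datum C H X XH \<pi> \<rho> \<longleftrightarrow>
     arr C \<rho> X XH \<and> arr C \<pi> (otens C X H) XH \<and> epi C \<pi>"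

text \<open>Geometric partial comodule: (GP1) and (GP2).  In (GP2) the three pushouts
(X\<bullet>H)\<bullet>H, X\<bullet>(H\<otimes>H), X\<bullet>(H\<bullet>H) are arbitrary choices of the pushouts.\<close>
definition geometric_partial_comodule ::
  "('o,'m) smc \<Rightarrow> 'o \<Rightarrow> 'm \<Rightarrow> 'm \<Rightarrow> 'o \<Rightarrow> 'o \<Rightarrow> 'm \<Rightarrow> 'm \<Rightarrow> bool" where
  "geometric_partial_comodule C H \<Delta> \<epsilon> X XH \<pi> \<rho> \<longleftrightarrow>
     partial_comodule_datum C H X XH \<pi> \<rho> \<and>
     (\<exists>e. arr C e XH X \<and> mcomp C e \<rho> = mid C X \<and> mcomp C e \<pi> = mtens C (mid C X) \<epsilon>) \<and>
     (\<forall>XHH \<rho>H \<pi>XH XHH2 X\<Delta> \<pi>X\<Delta> XHH3 \<pi>'X \<pi>'X\<Delta>.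
        is_pushout C \<pi> (mtens C \<rho> (mid C H)) XHH \<rho>H \<pi>XH \<longrightarrow>
        is_pushout C \<pi> (mtens C (mid C X) \<Delta>) XHH2 X\<Delta> \<pi>X\<Delta> \<longrightarrow>
        is_pushout C \<pi>X\<Delta> (mtens C \<pi> (mid C H)) XHH3 \<pi>'X \<pi>'X\<Delta> \<longrightarrow>
        (\<exists>\<theta>. iso C \<theta> XHH3 XHH \<and> mcomp C \<theta> \<pi>'X\<Delta> = \<pi>XH \<and>
             mcomp C \<rho>H \<rho> = mcomp C \<theta> (mcomp C \<pi>'X (mcomp C X\<Delta> \<rho>))))"

definition globalization ::
  "('o,'m) smc \<Rightarrow> 'o \<Rightarrow> 'm \<Rightarrow> 'm \<Rightarrow> 'o \<Rightarrow> 'o \<Rightarrow> 'm \<Rightarrow> 'm \<Rightarrow> 'o \<Rightarrow> 'm \<Rightarrow> 'm \<Rightarrow> bool" where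
  "globalization C H \<Delta> \<epsilon> X XH \<pi> \<rho> Y \<delta> p \<longleftrightarrow>
     comodule C H \<Delta> \<epsilon> Y \<delta> \<and> arr C p Y X \<and>
     mcomp C \<pi> (mcomp C (mtens C p (mid C H)) \<delta>) = mcomp C \<rho> p \<and>
     is_pushout C p (mcomp C (mtens C p (mid C H)) \<delta>) XH \<rho> \<pi> \<and>
     (\<forall>Z \<delta>' q. comodule C H \<Delta> \<epsilon> Z \<delta>' \<longrightarrow> arr C q Z X \<longrightarrow>
        mcomp C \<pi> (mcomp C (mtens C q (mid C H)) \<delta>') = mcomp C \<rho> q \<longrightarrow>
        (\<exists>!\<eta>. comod_hom C H Z \<delta>' Y \<delta> \<eta> \<and> mcomp C p \<eta> = q))"

definition globalizable ::
  "('o,'m) smc \<Rightarrow> 'o \<Rightarrow> 'm \<Rightarrow> 'm \<Rightarrow> 'o \<Rightarrow> 'o \<Rightarrow> 'm \<Rightarrow> 'm \<Rightarrow> bool" where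
  "globalizable C H \<Delta> \<epsilon> X XH \<pi> \<rho> \<longleftrightarrow>
     (\<exists>Y \<delta> p. globalization C H \<Delta> \<epsilon> X XH \<pi> \<rho> Y \<delta> p)"

end

theory Submission imports Defs begin

locale smcc =
  fixes C :: "('o,'m) smc" and H :: 'o and \<Delta> \<epsilon> :: 'm
  assumes smc: "strict_monoidal_category C"
    and coal: "coalgebra C H \<Delta> \<epsilon>"
begin

abbreviation cp (infixr "\<cdot>" 55) where "g \<cdot> f \<equiv> mcomp C g f"
abbreviation tn (infixr "\<odot>" 60) where "f \<odot> g \<equiv> mtens C f g"
abbreviation ot (infixr "\<oplus>" 60) where "A \<oplus> B \<equiv> otens C A B"
abbreviation ii where "ii A \<equiv> mid C A"
abbreviation dm where "dm f \<equiv> mdom C f"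
abbreviation cd where "cd f \<equiv> mcod C f"

lemma id_dom[simp]: "dm (ii A) = A" and id_cod[simp]: "cd (ii A) = A"
  using smc unfolding strict_monoidal_category_def arr_def by auto

lemma comp_dom[simp]: "cd f = dm g \<Longrightarrow> dm (g \<cdot> f) = dm f"
  and comp_cod[simp]: "cd f = dm g \<Longrightarrow> cd (g \<cdot> f) = cd g"
  using smc unfolding strict_monoidal_category_def arr_def by auto

lemma tens_dom[simp]: "dm (f \<odot> g) = dm f \<oplus> dm g"
  and tens_cod[simp]: "cd (f \<odot> g) = cd f \<oplus> cd g"
  using smc unfolding strict_monoidal_category_def arr_def by auto

lemma comp_idr: "dm f = A \<Longrightarrow> f \<cdot> ii A = f"
  and comp_idl: "cd f = A \<Longrightarrow> ii A \<cdot> f = f"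
  using smc unfolding strict_monoidal_category_def arr_def by auto

lemma assoc: "cd f = dm g \<Longrightarrow> cd g = dm h \<Longrightarrow> h \<cdot> (g \<cdot> f) = (h \<cdot> g) \<cdot> f"
  using smc unfolding strict_monoidal_category_def by auto

lemma tens_id: "ii A \<odot> ii B = ii (A \<oplus> B)"
  using smc unfolding strict_monoidal_category_def by auto

lemma interchange: "cd f = dm f' \<Longrightarrow> cd g = dm g' \<Longrightarrow> (f' \<cdot> f) \<odot> (g' \<cdot> g) = (f' \<odot> g') \<cdot> (f \<odot> g)"
  using smc unfolding strict_monoidal_category_def by auto

lemma otens_assoc[simp]: "(A \<oplus> B) \<oplus> D = A \<oplus> (B \<oplus> D)"
  using smc unfolding strict_monoidal_category_def by auto

lemma otens_unit[simp]: "unitobj C \<oplus> A = A" "A \<oplus> unitobj C = A"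
  using smc unfolding strict_monoidal_category_def by auto

lemma tens_assoc: "(f \<odot> g) \<odot> h = f \<odot> (g \<odot> h)"
  using smc unfolding strict_monoidal_category_def by auto

lemma tens_unit: "ii (unitobj C) \<odot> f = f" "f \<odot> ii (unitobj C) = f"
  using smc unfolding strict_monoidal_category_def by auto

lemma D_dom[simp]: "dm \<Delta> = H" and D_cod[simp]: "cd \<Delta> = H \<oplus> H"
  and e_dom[simp]: "dm \<epsilon> = H" and e_cod[simp]: "cd \<epsilon> = unitobj C"
  using coal unfolding coalgebra_def arr_def by auto

lemma coassoc: "(\<Delta> \<odot> ii H) \<cdot> \<Delta> = (ii H \<odot> \<Delta>) \<cdot> \<Delta>"
  and counitl: "(\<epsilon> \<odot> ii H) \<cdot> \<Delta> = ii H"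
  and counitr: "(ii H \<odot> \<epsilon>) \<cdot> \<Delta> = ii H"
  using coal unfolding coalgebra_def by auto

lemma split1: "f \<odot> g = (f \<odot> ii (cd g)) \<cdot> (ii (dm f) \<odot> g)"
  using interchange[of "ii (dm f)" f g "ii (cd g)"] by (simp add: comp_idr comp_idl)

lemma split2: "f \<odot> g = (ii (cd f) \<odot> g) \<cdot> (f \<odot> ii (dm g))"
  using interchange[of f "ii (cd f)" "ii (dm g)" g] by (simp add: comp_idr comp_idl)

lemma idid: "ii A \<cdot> ii A = ii A" by (simp add: comp_idr)

definition comod where "comod Y \<delta> \<equiv> comodule C H \<Delta> \<epsilon> Y \<delta>"

lemma comodD: assumes "comodule C H \<Delta> \<epsilon> Y \<delta>"
  shows "dm \<delta> = Y" "cd \<delta> = Y \<oplus> H" "(\<delta> \<odot> ii H) \<cdot> \<delta> = (ii Y \<odot> \<Delta>) \<cdot> \<delta>"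
    "(ii Y \<odot> \<epsilon>) \<cdot> \<delta> = ii Y"
  using assms unfolding comodule_def arr_def by auto

lemma homD: assumes "comod_hom C H Y \<delta> Y' \<delta>' f"
  shows "dm f = Y" "cd f = Y'" "\<delta>' \<cdot> f = (f \<odot> ii H) \<cdot> \<delta>"
  using assms unfolding comod_hom_def arr_def by auto

lemma counit_back:
  assumes Y: "comodule C H \<Delta> \<epsilon> Y \<delta>" and f: "dm f = Y" "cd f = X'"
  shows "(ii X' \<odot> \<epsilon>) \<cdot> ((f \<odot> ii H) \<cdot> \<delta>) = f"
proof -
  note c = comodD[OF Y]
  have "(ii X' \<odot> \<epsilon>) \<cdot> ((f \<odot> ii H) \<cdot> \<delta>) = ((ii X' \<odot> \<epsilon>) \<cdot> (f \<odot> ii H)) \<cdot> \<delta>"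
    using c(1,2) f by (simp add: assoc)
  also have "(ii X' \<odot> \<epsilon>) \<cdot> (f \<odot> ii H) = f \<odot> \<epsilon>"
    using interchange[of f "ii X'" "ii H" \<epsilon>] f by (simp add: comp_idl comp_idr)
  also have "f \<odot> \<epsilon> = f \<cdot> (ii Y \<odot> \<epsilon>)"
    using split1[of f \<epsilon>] f by (simp add: tens_unit)
  also have "(f \<cdot> (ii Y \<odot> \<epsilon>)) \<cdot> \<delta> = f \<cdot> ((ii Y \<odot> \<epsilon>) \<cdot> \<delta>)"
    using c(1,2) f by (simp add: assoc)
  also have "\<dots> = f" using c f by (simp add: comp_idr)
  finally show ?thesis .
qed

lemma hom_free:
  assumes q: "comod_hom C H W \<delta>W (X \<oplus> H) (ii X \<odot> \<Delta>) q" and W: "comodule C H \<Delta> \<epsilon> W \<delta>W"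
  shows "(((ii X \<odot> \<epsilon>) \<cdot> q) \<odot> ii H) \<cdot> \<delta>W = q"
proof -
  note h = homD[OF q] and c = comodD[OF W]
  have "(((ii X \<odot> \<epsilon>) \<cdot> q) \<odot> ii H) = ((ii X \<odot> \<epsilon>) \<odot> ii H) \<cdot> (q \<odot> ii H)"
    using interchange[of q "ii X \<odot> \<epsilon>" "ii H" "ii H"] h by (simp add: idid)
  then have "(((ii X \<odot> \<epsilon>) \<cdot> q) \<odot> ii H) \<cdot> \<delta>W = ((ii X \<odot> \<epsilon>) \<odot> ii H) \<cdot> ((q \<odot> ii H) \<cdot> \<delta>W)"
    using h(1,2) c(1,2) by (simp add: assoc)
  also have "\<dots> = ((ii X \<odot> \<epsilon>) \<odot> ii H) \<cdot> ((ii X \<odot> \<Delta>) \<cdot> q)" using h by simp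
  also have "\<dots> = (((ii X \<odot> \<epsilon>) \<odot> ii H) \<cdot> (ii X \<odot> \<Delta>)) \<cdot> q" using h(1,2) by (simp add: assoc)
  also have "((ii X \<odot> \<epsilon>) \<odot> ii H) \<cdot> (ii X \<odot> \<Delta>) = ii (X \<oplus> H)"
    using interchange[of "ii X" "ii X" \<Delta> "\<epsilon> \<odot> ii H"]
    by (simp add: tens_assoc idid counitl tens_id)
  also have "ii (X \<oplus> H) \<cdot> q = q" using h by (simp add: comp_idl)
  finally show ?thesis .
qed

lemma free_hom:
  assumes Z: "comodule C H \<Delta> \<epsilon> Z \<delta>" and q: "dm q = Z" "cd q = X"
  shows "comod_hom C H Z \<delta> (X \<oplus> H) (ii X \<odot> \<Delta>) ((q \<odot> ii H) \<cdot> \<delta>)"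
proof -
  note c = comodD[OF Z]
  have "(ii X \<odot> \<Delta>) \<cdot> ((q \<odot> ii H) \<cdot> \<delta>) = ((ii X \<odot> \<Delta>) \<cdot> (q \<odot> ii H)) \<cdot> \<delta>"
    using c(1,2) q by (simp add: assoc)
  also have "(ii X \<odot> \<Delta>) \<cdot> (q \<odot> ii H) = q \<odot> \<Delta>"
    using interchange[of q "ii X" "ii H" \<Delta>] q by (simp add: comp_idl comp_idr)
  also have "q \<odot> \<Delta> = ((q \<odot> ii H) \<odot> ii H) \<cdot> (ii Z \<odot> \<Delta>)"
    using split1[of q \<Delta>] q by (simp add: tens_assoc tens_id)
  also have "(((q \<odot> ii H) \<odot> ii H) \<cdot> (ii Z \<odot> \<Delta>)) \<cdot> \<delta> = ((q \<odot> ii H) \<odot> ii H) \<cdot> ((ii Z \<odot> \<Delta>) \<cdot> \<delta>)"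
    using c(1,2) q by (simp add: assoc)
  also have "\<dots> = ((q \<odot> ii H) \<odot> ii H) \<cdot> ((\<delta> \<odot> ii H) \<cdot> \<delta>)" using c(3) by simp
  also have "\<dots> = (((q \<odot> ii H) \<odot> ii H) \<cdot> (\<delta> \<odot> ii H)) \<cdot> \<delta>" using c(1,2) q by (simp add: assoc)
  also have "((q \<odot> ii H) \<odot> ii H) \<cdot> (\<delta> \<odot> ii H) = ((q \<odot> ii H) \<cdot> \<delta>) \<odot> ii H"
    using interchange[of \<delta> "q \<odot> ii H" "ii H" "ii H"] c(1,2) q by (simp add: idid)
  finally show ?thesis unfolding comod_hom_def arr_def using c(1,2) q by simp
qed

lemma tens_comp_hom:
  assumes eta: "comod_hom C H Z \<delta>' Y \<delta> \<eta>" and Z: "comodule C H \<Delta> \<epsilon> Z \<delta>'"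
    and p: "dm p = Y" and Yc: "comodule C H \<Delta> \<epsilon> Y \<delta>"
  shows "((p \<cdot> \<eta>) \<odot> ii H) \<cdot> \<delta>' = ((p \<odot> ii H) \<cdot> \<delta>) \<cdot> \<eta>"
proof -
  note h = homD[OF eta] and c = comodD[OF Z]
  have "((p \<cdot> \<eta>) \<odot> ii H) = (p \<odot> ii H) \<cdot> (\<eta> \<odot> ii H)"
    using interchange[of \<eta> p "ii H" "ii H"] h p by (simp add: idid)
  then have "((p \<cdot> \<eta>) \<odot> ii H) \<cdot> \<delta>' = (p \<odot> ii H) \<cdot> ((\<eta> \<odot> ii H) \<cdot> \<delta>')"
    using h(1,2) c(1,2) p by (simp add: assoc)
  also have "\<dots> = (p \<odot> ii H) \<cdot> (\<delta> \<cdot> \<eta>)" using h(3) by simp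
  also have "\<dots> = ((p \<odot> ii H) \<cdot> \<delta>) \<cdot> \<eta>"
    using comodD(1,2)[OF Yc] h(1,2) p by (simp add: assoc)
  finally show ?thesis .
qed

lemma eq_counit:
  assumes q: "dm q = W" "cd q = X \<oplus> H" and rho: "dm \<rho> = X" "cd \<rho> = XH"
    and pi: "dm \<pi> = X \<oplus> H" "cd \<pi> = XH"
    and eq: "(\<rho> \<odot> ii H) \<cdot> q = ((\<pi> \<odot> ii H) \<cdot> (ii X \<odot> \<Delta>)) \<cdot> q"
  shows "\<pi> \<cdot> q = \<rho> \<cdot> ((ii X \<odot> \<epsilon>) \<cdot> q)"
proof -
  have a: "(ii XH \<odot> \<epsilon>) \<cdot> (\<rho> \<odot> ii H) = \<rho> \<cdot> (ii X \<odot> \<epsilon>)"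
  proof -
    have "(ii XH \<odot> \<epsilon>) \<cdot> (\<rho> \<odot> ii H) = \<rho> \<odot> \<epsilon>"
      using interchange[of \<rho> "ii XH" "ii H" \<epsilon>] rho by (simp add: comp_idl comp_idr)
    also have "\<dots> = \<rho> \<cdot> (ii X \<odot> \<epsilon>)" using split1[of \<rho> \<epsilon>] rho by (simp add: tens_unit)
    finally show ?thesis .
  qed
  have b: "(ii XH \<odot> \<epsilon>) \<cdot> ((\<pi> \<odot> ii H) \<cdot> (ii X \<odot> \<Delta>)) = \<pi>"
  proof -
    have "(ii XH \<odot> \<epsilon>) \<cdot> ((\<pi> \<odot> ii H) \<cdot> (ii X \<odot> \<Delta>)) = ((ii XH \<odot> \<epsilon>) \<cdot> (\<pi> \<odot> ii H)) \<cdot> (ii X \<odot> \<Delta>)"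
      using pi by (simp add: assoc)
    also have "(ii XH \<odot> \<epsilon>) \<cdot> (\<pi> \<odot> ii H) = \<pi> \<odot> \<epsilon>"
      using interchange[of \<pi> "ii XH" "ii H" \<epsilon>] pi by (simp add: comp_idl comp_idr)
    also have "\<dots> = \<pi> \<cdot> (ii X \<odot> (ii H \<odot> \<epsilon>))" using split1[of \<pi> \<epsilon>] pi
      by (simp add: tens_unit tens_assoc flip: tens_id)
    also have "(\<pi> \<cdot> (ii X \<odot> (ii H \<odot> \<epsilon>))) \<cdot> (ii X \<odot> \<Delta>) = \<pi> \<cdot> ((ii X \<odot> (ii H \<odot> \<epsilon>)) \<cdot> (ii X \<odot> \<Delta>))"
      using pi by (simp add: assoc)
    also have "(ii X \<odot> (ii H \<odot> \<epsilon>)) \<cdot> (ii X \<odot> \<Delta>) = ii (X \<oplus> H)"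
      using interchange[of "ii X" "ii X" \<Delta> "ii H \<odot> \<epsilon>"] by (simp add: idid counitr tens_id)
    also have "\<pi> \<cdot> ii (X \<oplus> H) = \<pi>" using pi by (simp add: comp_idr)
    finally show ?thesis .
  qed
  have "(ii XH \<odot> \<epsilon>) \<cdot> ((\<rho> \<odot> ii H) \<cdot> q) = ((ii XH \<odot> \<epsilon>) \<cdot> (\<rho> \<odot> ii H)) \<cdot> q"
    using q rho by (simp add: assoc)
  also have "\<dots> = \<rho> \<cdot> ((ii X \<odot> \<epsilon>) \<cdot> q)" unfolding a using q rho by (simp add: assoc)
  finally have 1: "(ii XH \<odot> \<epsilon>) \<cdot> ((\<rho> \<odot> ii H) \<cdot> q) = \<rho> \<cdot> ((ii X \<odot> \<epsilon>) \<cdot> q)" .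
  have "(ii XH \<odot> \<epsilon>) \<cdot> (((\<pi> \<odot> ii H) \<cdot> (ii X \<odot> \<Delta>)) \<cdot> q) = ((ii XH \<odot> \<epsilon>) \<cdot> ((\<pi> \<odot> ii H) \<cdot> (ii X \<odot> \<Delta>))) \<cdot> q"
    using q pi by (simp add: assoc)
  also have "\<dots> = \<pi> \<cdot> q" unfolding b ..
  finally show ?thesis using 1 eq by simp
qed

lemma equalizes:
  assumes Y: "comodule C H \<Delta> \<epsilon> Y \<delta>" and p: "dm p = Y" "cd p = X"
    and rho: "dm \<rho> = X" "cd \<rho> = XH"
    and pi: "dm \<pi> = X \<oplus> H" "cd \<pi> = XH"
    and gl1: "\<pi> \<cdot> ((p \<odot> ii H) \<cdot> \<delta>) = \<rho> \<cdot> p"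
  shows "(\<rho> \<odot> ii H) \<cdot> ((p \<odot> ii H) \<cdot> \<delta>) = ((\<pi> \<odot> ii H) \<cdot> (ii X \<odot> \<Delta>)) \<cdot> ((p \<odot> ii H) \<cdot> \<delta>)"
proof -
  note c = comodD[OF Y]
  define k where "k = (p \<odot> ii H) \<cdot> \<delta>"
  have k: "dm k = Y" "cd k = X \<oplus> H" unfolding k_def using c(1,2) p by simp_all
  have kh: "(ii X \<odot> \<Delta>) \<cdot> k = (k \<odot> ii H) \<cdot> \<delta>"
    using homD(3)[OF free_hom[OF Y p]] unfolding k_def .
  have "(\<rho> \<odot> ii H) \<cdot> k = ((\<rho> \<odot> ii H) \<cdot> (p \<odot> ii H)) \<cdot> \<delta>"
    unfolding k_def using c(1,2) p rho by (simp add: assoc)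
  also have "(\<rho> \<odot> ii H) \<cdot> (p \<odot> ii H) = (\<rho> \<cdot> p) \<odot> ii H"
    using interchange[of p \<rho> "ii H" "ii H"] p rho by (simp add: idid)
  also have "\<rho> \<cdot> p = \<pi> \<cdot> k" using gl1 unfolding k_def by simp
  also have "(\<pi> \<cdot> k) \<odot> ii H = (\<pi> \<odot> ii H) \<cdot> (k \<odot> ii H)"
    using interchange[of k \<pi> "ii H" "ii H"] k pi by (simp add: idid)
  also have "((\<pi> \<odot> ii H) \<cdot> (k \<odot> ii H)) \<cdot> \<delta> = (\<pi> \<odot> ii H) \<cdot> ((k \<odot> ii H) \<cdot> \<delta>)"
    using k pi c(1,2) by (simp add: assoc)
  also have "\<dots> = (\<pi> \<odot> ii H) \<cdot> ((ii X \<odot> \<Delta>) \<cdot> k)" unfolding kh ..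
  also have "\<dots> = ((\<pi> \<odot> ii H) \<cdot> (ii X \<odot> \<Delta>)) \<cdot> k" using k pi by (simp add: assoc)
  finally show ?thesis unfolding k_def .
qed

lemma hom_comp:
  assumes a: "comod_hom C H W \<delta>W Y \<delta> a" and b: "comod_hom C H Y \<delta> Z \<delta>Z b"
    and W: "comodule C H \<Delta> \<epsilon> W \<delta>W" and Y: "comodule C H \<Delta> \<epsilon> Y \<delta>"
    and Zc: "comodule C H \<Delta> \<epsilon> Z \<delta>Z"
  shows "comod_hom C H W \<delta>W Z \<delta>Z (b \<cdot> a)"
proof -
  note ha = homD[OF a] and hb = homD[OF b] and cW = comodD[OF W] and cY = comodD[OF Y]
    and cZ = comodD[OF Zc]
  have "\<delta>Z \<cdot> (b \<cdot> a) = (\<delta>Z \<cdot> b) \<cdot> a" using ha(1,2) hb(1,2) cZ(1,2) by (simp add: assoc)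
  also have "\<dots> = ((b \<odot> ii H) \<cdot> \<delta>) \<cdot> a" unfolding hb(3) ..
  also have "\<dots> = (b \<odot> ii H) \<cdot> (\<delta> \<cdot> a)" using ha(1,2) hb(1,2) cY(1,2) by (simp add: assoc)
  also have "\<dots> = (b \<odot> ii H) \<cdot> ((a \<odot> ii H) \<cdot> \<delta>W)" unfolding ha(3) ..
  also have "\<dots> = ((b \<odot> ii H) \<cdot> (a \<odot> ii H)) \<cdot> \<delta>W" using ha(1,2) hb(1,2) cW(1,2) by (simp add: assoc)
  also have "(b \<odot> ii H) \<cdot> (a \<odot> ii H) = (b \<cdot> a) \<odot> ii H"
    using interchange[of a b "ii H" "ii H"] ha(1,2) hb(1,2) by (simp add: idid)
  finally show ?thesis unfolding comod_hom_def arr_def using ha(1,2) hb(1,2) by simp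
qed

lemma free_comod: "comodule C H \<Delta> \<epsilon> (X \<oplus> H) (ii X \<odot> \<Delta>)"
proof -
  have 1: "((ii X \<odot> \<Delta>) \<odot> ii H) \<cdot> (ii X \<odot> \<Delta>) = (ii (X \<oplus> H) \<odot> \<Delta>) \<cdot> (ii X \<odot> \<Delta>)"
  proof -
    have "((ii X \<odot> \<Delta>) \<odot> ii H) \<cdot> (ii X \<odot> \<Delta>) = ii X \<odot> ((\<Delta> \<odot> ii H) \<cdot> \<Delta>)"
      using interchange[of "ii X" "ii X" \<Delta> "\<Delta> \<odot> ii H"] by (simp add: idid tens_assoc)
    also have "\<dots> = ii X \<odot> ((ii H \<odot> \<Delta>) \<cdot> \<Delta>)" by (simp add: coassoc)
    also have "\<dots> = (ii (X \<oplus> H) \<odot> \<Delta>) \<cdot> (ii X \<odot> \<Delta>)"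
      using interchange[of "ii X" "ii X" \<Delta> "ii H \<odot> \<Delta>"] by (simp add: idid tens_assoc flip: tens_id)
    finally show ?thesis .
  qed
  have e: "ii (X \<oplus> H) \<odot> \<epsilon> = ii X \<odot> (ii H \<odot> \<epsilon>)"
    by (simp add: tens_assoc flip: tens_id)
  have 2: "(ii (X \<oplus> H) \<odot> \<epsilon>) \<cdot> (ii X \<odot> \<Delta>) = ii (X \<oplus> H)"
    unfolding e using interchange[of "ii X" "ii X" \<Delta> "ii H \<odot> \<epsilon>"]
    by (simp add: idid counitr tens_id)
  show ?thesis unfolding comodule_def arr_def using 1 2 by simp
qed

lemma main:
  assumes rho: "dm \<rho> = X" "cd \<rho> = XH"
    and pi: "dm \<pi> = X \<oplus> H" "cd \<pi> = XH"
  shows "(globalizable C H \<Delta> \<epsilon> X XH \<pi> \<rho> \<longleftrightarrow>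
           (\<exists>Y \<delta> \<kappa>.
              comod_equalizer C H \<Delta> \<epsilon> (otens C X H) (mtens C (mid C X) \<Delta>)
                 (mtens C \<rho> (mid C H))
                 (mcomp C (mtens C \<pi> (mid C H)) (mtens C (mid C X) \<Delta>)) Y \<delta> \<kappa> \<and>
              is_pushout C (mcomp C (mtens C (mid C X) \<epsilon>) \<kappa>) \<kappa> XH \<rho> \<pi>))
       \<and> (\<forall>Y \<delta> \<kappa>.
              comod_equalizer C H \<Delta> \<epsilon> (otens C X H) (mtens C (mid C X) \<Delta>)
                 (mtens C \<rho> (mid C H))
                 (mcomp C (mtens C \<pi> (mid C H)) (mtens C (mid C X) \<Delta>)) Y \<delta> \<kappa> \<longrightarrow>
              is_pushout C (mcomp C (mtens C (mid C X) \<epsilon>) \<kappa>) \<kappa> XH \<rho> \<pi> \<longrightarrow>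
              globalization C H \<Delta> \<epsilon> X XH \<pi> \<rho> Y \<delta> (mcomp C (mtens C (mid C X) \<epsilon>) \<kappa>) \<and>
              comod_mono C H \<Delta> \<epsilon> Y \<delta> (otens C X H) (mtens C (mid C X) \<Delta>)
                 (mcomp C (mtens C (mcomp C (mtens C (mid C X) \<epsilon>) \<kappa>) (mid C H)) \<delta>))"
    (is "(?G \<longleftrightarrow> ?E) \<and> ?M")
proof -
  let ?f1 = "\<rho> \<odot> ii H" and ?f2 = "(\<pi> \<odot> ii H) \<cdot> (ii X \<odot> \<Delta>)"
  have M: ?M
  proof (intro allI impI)
    fix Y \<delta> \<kappa>
    assume eqz: "comod_equalizer C H \<Delta> \<epsilon> (X \<oplus> H) (ii X \<odot> \<Delta>) ?f1 ?f2 Y \<delta> \<kappa>"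
      and po: "is_pushout C ((ii X \<odot> \<epsilon>) \<cdot> \<kappa>) \<kappa> XH \<rho> \<pi>"
    define p where "p = (ii X \<odot> \<epsilon>) \<cdot> \<kappa>"
    have Yc: "comodule C H \<Delta> \<epsilon> Y \<delta>" and kh: "comod_hom C H Y \<delta> (X \<oplus> H) (ii X \<odot> \<Delta>) \<kappa>"
      and keq: "?f1 \<cdot> \<kappa> = ?f2 \<cdot> \<kappa>"
      and univ: "\<And>W \<delta>W q. comodule C H \<Delta> \<epsilon> W \<delta>W \<Longrightarrow> comod_hom C H W \<delta>W (X \<oplus> H) (ii X \<odot> \<Delta>) q \<Longrightarrow>
        ?f1 \<cdot> q = ?f2 \<cdot> q \<Longrightarrow> (\<exists>!u. comod_hom C H W \<delta>W Y \<delta> u \<and> \<kappa> \<cdot> u = q)"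
      using eqz unfolding comod_equalizer_def by auto
    note k = homD[OF kh]
    have p: "dm p = Y" "cd p = X" unfolding p_def using k(1,2) by simp_all
    have kp: "(p \<odot> ii H) \<cdot> \<delta> = \<kappa>" unfolding p_def using hom_free[OF kh Yc] .
    have gl1: "\<pi> \<cdot> ((p \<odot> ii H) \<cdot> \<delta>) = \<rho> \<cdot> p"
      unfolding kp using po unfolding is_pushout_def p_def by simp
    have glob: "globalization C H \<Delta> \<epsilon> X XH \<pi> \<rho> Y \<delta> p"
      unfolding globalization_def
    proof (intro conjI allI impI)
      show "comodule C H \<Delta> \<epsilon> Y \<delta>" by (fact Yc)
      show "arr C p Y X" using p unfolding arr_def by simp
      show "\<pi> \<cdot> ((p \<odot> ii H) \<cdot> \<delta>) = \<rho> \<cdot> p" by (fact gl1)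
      show "is_pushout C p ((p \<odot> ii H) \<cdot> \<delta>) XH \<rho> \<pi>" using po kp unfolding p_def by simp
    next
      fix Z \<delta>' q
      assume Z: "comodule C H \<Delta> \<epsilon> Z \<delta>'" and q: "arr C q Z X"
        and gq: "\<pi> \<cdot> ((q \<odot> ii H) \<cdot> \<delta>') = \<rho> \<cdot> q"
      have q': "dm q = Z" "cd q = X" using q unfolding arr_def by auto
      have qh: "comod_hom C H Z \<delta>' (X \<oplus> H) (ii X \<odot> \<Delta>) ((q \<odot> ii H) \<cdot> \<delta>')"
        by (rule free_hom[OF Z q'])
      have qe: "?f1 \<cdot> ((q \<odot> ii H) \<cdot> \<delta>') = ?f2 \<cdot> ((q \<odot> ii H) \<cdot> \<delta>')"
        by (rule equalizes[OF Z q' rho pi gq])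
      obtain u where u: "comod_hom C H Z \<delta>' Y \<delta> u" "\<kappa> \<cdot> u = (q \<odot> ii H) \<cdot> \<delta>'"
        and uu: "\<And>v. comod_hom C H Z \<delta>' Y \<delta> v \<Longrightarrow> \<kappa> \<cdot> v = (q \<odot> ii H) \<cdot> \<delta>' \<Longrightarrow> v = u"
        using univ[OF Z qh qe] by metis
      note hu = homD[OF u(1)]
      show "\<exists>!\<eta>. comod_hom C H Z \<delta>' Y \<delta> \<eta> \<and> p \<cdot> \<eta> = q"
      proof (rule ex1I[of _ u])
        have "p \<cdot> u = (ii X \<odot> \<epsilon>) \<cdot> (\<kappa> \<cdot> u)" unfolding p_def using hu(1,2) k(1,2)
          by (simp add: assoc)
        also have "\<dots> = q" unfolding u(2) by (rule counit_back[OF Z q'])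
        finally show "comod_hom C H Z \<delta>' Y \<delta> u \<and> p \<cdot> u = q" using u(1) by simp
      next
        fix v assume v: "comod_hom C H Z \<delta>' Y \<delta> v \<and> p \<cdot> v = q"
        have "\<kappa> \<cdot> v = ((p \<odot> ii H) \<cdot> \<delta>) \<cdot> v" unfolding kp ..
        also have "\<dots> = ((p \<cdot> v) \<odot> ii H) \<cdot> \<delta>'"
          using tens_comp_hom[OF _ Z p(1) Yc, of v] v by simp
        finally show "v = u" using uu v by simp
      qed
    qed
    have mono: "comod_mono C H \<Delta> \<epsilon> Y \<delta> (X \<oplus> H) (ii X \<odot> \<Delta>) ((p \<odot> ii H) \<cdot> \<delta>)"
      unfolding comod_mono_def kp
    proof (intro conjI allI impI)
      show "comod_hom C H Y \<delta> (X \<oplus> H) (ii X \<odot> \<Delta>) \<kappa>" by (fact kh)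
      fix W \<delta>W a b
      assume W: "comodule C H \<Delta> \<epsilon> W \<delta>W" and a: "comod_hom C H W \<delta>W Y \<delta> a"
        and b: "comod_hom C H W \<delta>W Y \<delta> b" and ab: "\<kappa> \<cdot> a = \<kappa> \<cdot> b"
      have ka: "comod_hom C H W \<delta>W (X \<oplus> H) (ii X \<odot> \<Delta>) (\<kappa> \<cdot> a)"
        by (rule hom_comp[OF a kh W Yc free_comod])
      note ha = homD[OF a]
      have "?f1 \<cdot> (\<kappa> \<cdot> a) = (?f1 \<cdot> \<kappa>) \<cdot> a" using ha(1,2) k(1,2) rho by (simp add: assoc)
      also have "\<dots> = (?f2 \<cdot> \<kappa>) \<cdot> a" unfolding keq ..
      also have "\<dots> = ?f2 \<cdot> (\<kappa> \<cdot> a)" using ha(1,2) k(1,2) pi by (simp add: assoc)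
      finally have "\<exists>!u. comod_hom C H W \<delta>W Y \<delta> u \<and> \<kappa> \<cdot> u = \<kappa> \<cdot> a" using univ[OF W ka] by blast
      then show "a = b" using a b ab by metis
    qed
    show "globalization C H \<Delta> \<epsilon> X XH \<pi> \<rho> Y \<delta> ((ii X \<odot> \<epsilon>) \<cdot> \<kappa>) \<and>
          comod_mono C H \<Delta> \<epsilon> Y \<delta> (X \<oplus> H) (ii X \<odot> \<Delta>) ((((ii X \<odot> \<epsilon>) \<cdot> \<kappa>) \<odot> ii H) \<cdot> \<delta>)"
      using glob mono unfolding p_def by simp
  qed
  have fwd: ?E if G: ?G
  proof -
    obtain Y \<delta> p where gl: "globalization C H \<Delta> \<epsilon> X XH \<pi> \<rho> Y \<delta> p"
      using G unfolding globalizable_def by blast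
    have Yc: "comodule C H \<Delta> \<epsilon> Y \<delta>" and pa: "arr C p Y X"
      and gl1: "\<pi> \<cdot> ((p \<odot> ii H) \<cdot> \<delta>) = \<rho> \<cdot> p"
      and po: "is_pushout C p ((p \<odot> ii H) \<cdot> \<delta>) XH \<rho> \<pi>"
      and gl3: "\<And>Z \<delta>' q. comodule C H \<Delta> \<epsilon> Z \<delta>' \<Longrightarrow> arr C q Z X \<Longrightarrow>
        \<pi> \<cdot> ((q \<odot> ii H) \<cdot> \<delta>') = \<rho> \<cdot> q \<Longrightarrow> (\<exists>!\<eta>. comod_hom C H Z \<delta>' Y \<delta> \<eta> \<and> p \<cdot> \<eta> = q)"
      using gl unfolding globalization_def by auto
    have p: "dm p = Y" "cd p = X" using pa unfolding arr_def by auto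
    define \<kappa> where "\<kappa> = (p \<odot> ii H) \<cdot> \<delta>"
    have pk: "(ii X \<odot> \<epsilon>) \<cdot> \<kappa> = p" unfolding \<kappa>_def by (rule counit_back[OF Yc p])
    have kh: "comod_hom C H Y \<delta> (X \<oplus> H) (ii X \<odot> \<Delta>) \<kappa>" unfolding \<kappa>_def by (rule free_hom[OF Yc p])
    note k = homD[OF kh]
    have "comod_equalizer C H \<Delta> \<epsilon> (X \<oplus> H) (ii X \<odot> \<Delta>) ?f1 ?f2 Y \<delta> \<kappa>"
      unfolding comod_equalizer_def
    proof (intro conjI allI impI)
      show "comodule C H \<Delta> \<epsilon> Y \<delta>" by (fact Yc)
      show "comod_hom C H Y \<delta> (X \<oplus> H) (ii X \<odot> \<Delta>) \<kappa>" by (fact kh)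
      show "?f1 \<cdot> \<kappa> = ?f2 \<cdot> \<kappa>" unfolding \<kappa>_def by (rule equalizes[OF Yc p rho pi gl1])
    next
      fix W \<delta>W q
      assume W: "comodule C H \<Delta> \<epsilon> W \<delta>W" and qh: "comod_hom C H W \<delta>W (X \<oplus> H) (ii X \<odot> \<Delta>) q"
        and qe: "?f1 \<cdot> q = ?f2 \<cdot> q"
      note hq = homD[OF qh]
      define q0 where "q0 = (ii X \<odot> \<epsilon>) \<cdot> q"
      have q0: "dm q0 = W" "cd q0 = X" unfolding q0_def using hq(1,2) by simp_all
      have q0q: "(q0 \<odot> ii H) \<cdot> \<delta>W = q" unfolding q0_def by (rule hom_free[OF qh W])
      have "\<pi> \<cdot> q = \<rho> \<cdot> q0" unfolding q0_def by (rule eq_counit[OF hq(1,2) rho pi qe])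
      then have "\<pi> \<cdot> ((q0 \<odot> ii H) \<cdot> \<delta>W) = \<rho> \<cdot> q0" unfolding q0q .
      then obtain u where u: "comod_hom C H W \<delta>W Y \<delta> u" "p \<cdot> u = q0"
        and uu: "\<And>v. comod_hom C H W \<delta>W Y \<delta> v \<Longrightarrow> p \<cdot> v = q0 \<Longrightarrow> v = u"
        using gl3[OF W] q0 unfolding arr_def by metis
      note hu = homD[OF u(1)]
      show "\<exists>!u. comod_hom C H W \<delta>W Y \<delta> u \<and> \<kappa> \<cdot> u = q"
      proof (rule ex1I[of _ u])
        have "\<kappa> \<cdot> u = ((p \<cdot> u) \<odot> ii H) \<cdot> \<delta>W"
          unfolding \<kappa>_def using tens_comp_hom[OF u(1) W p(1) Yc] by simp
        then show "comod_hom C H W \<delta>W Y \<delta> u \<and> \<kappa> \<cdot> u = q" using u q0q by simp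
      next
        fix v assume v: "comod_hom C H W \<delta>W Y \<delta> v \<and> \<kappa> \<cdot> v = q"
        note hv = homD[OF conjunct1[OF v]]
        have "p \<cdot> v = ((ii X \<odot> \<epsilon>) \<cdot> \<kappa>) \<cdot> v" unfolding pk ..
        also have "\<dots> = (ii X \<odot> \<epsilon>) \<cdot> (\<kappa> \<cdot> v)" using hv(1,2) k(1,2) by (simp add: assoc)
        finally have "p \<cdot> v = q0" using v unfolding q0_def by simp
        then show "v = u" using uu v by simp
      qed
    qed
    moreover have "is_pushout C ((ii X \<odot> \<epsilon>) \<cdot> \<kappa>) \<kappa> XH \<rho> \<pi>" using po pk unfolding \<kappa>_def by simp
    ultimately show ?thesis by blast
  qed
  have bwd: ?G if E: ?E
  proof -
    from E obtain Y \<delta> \<kappa> where "comod_equalizer C H \<Delta> \<epsilon> (X \<oplus> H) (ii X \<odot> \<Delta>) ?f1 ?f2 Y \<delta> \<kappa>"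
      "is_pushout C ((ii X \<odot> \<epsilon>) \<cdot> \<kappa>) \<kappa> XH \<rho> \<pi>" by blast
    with M show ?thesis unfolding globalizable_def by blast
  qed
  show ?thesis using M fwd bwd by blast
qed

end

theorem theorem3p5:
  fixes C :: "('o, 'm) smc"
    and H X XH :: 'o
    and \<Delta> \<epsilon> \<pi> \<rho> :: 'm
  assumes "strict_monoidal_category C"
    and "has_pushouts C"
    and "coalgebra C H \<Delta> \<epsilon>"
    and "geometric_partial_comodule C H \<Delta> \<epsilon> X XH \<pi> \<rho>"
  shows "(globalizable C H \<Delta> \<epsilon> X XH \<pi> \<rho> \<longleftrightarrow>
           (\<exists>Y \<delta> \<kappa>.
              comod_equalizer C H \<Delta> \<epsilon> (otens C X H) (mtens C (mid C X) \<Delta>)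
                 (mtens C \<rho> (mid C H))
                 (mcomp C (mtens C \<pi> (mid C H)) (mtens C (mid C X) \<Delta>)) Y \<delta> \<kappa> \<and>
              is_pushout C (mcomp C (mtens C (mid C X) \<epsilon>) \<kappa>) \<kappa> XH \<rho> \<pi>))
       \<and> (\<forall>Y \<delta> \<kappa>.
              comod_equalizer C H \<Delta> \<epsilon> (otens C X H) (mtens C (mid C X) \<Delta>)
                 (mtens C \<rho> (mid C H))
                 (mcomp C (mtens C \<pi> (mid C H)) (mtens C (mid C X) \<Delta>)) Y \<delta> \<kappa> \<longrightarrow>
              is_pushout C (mcomp C (mtens C (mid C X) \<epsilon>) \<kappa>) \<kappa> XH \<rho> \<pi> \<longrightarrow>
              globalization C H \<Delta> \<epsilon> X XH \<pi> \<rho> Y \<delta> (mcomp C (mtens C (mid C X) \<epsilon>) \<kappa>) \<and>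
              comod_mono C H \<Delta> \<epsilon> Y \<delta> (otens C X H) (mtens C (mid C X) \<Delta>)
                 (mcomp C (mtens C (mcomp C (mtens C (mid C X) \<epsilon>) \<kappa>) (mid C H)) \<delta>))"
proof -
  interpret smcc C H \<Delta> \<epsilon> using assms(1,3) by unfold_locales
  have "arr C \<rho> X XH" "arr C \<pi> (otens C X H) XH"
    using assms(4) unfolding geometric_partial_comodule_def partial_comodule_datum_def by auto
  then show ?thesis by (intro main) (auto simp: arr_def)
qed

end
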